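(* Let $G$ be a discrete group, $A$ an abelian group, $\alpha\colon G^3\to A$ a normalized 3-cocycle, $\mathcal{G}=\mathcal{G}(G,A,\alpha)$, and $X$ a smooth manifold. Let $u\colon Y\to X$ be a surjective submersion, let $\rho_1,\rho_2$ be $G$-valued Čech 1-cocycles on $Y$, let $h\colon Y\to G$ be locally constant with $\rho_2(y_1,y_2)h(y_2)=h(y_1)\rho_1(y_1,y_2)$ (so that $h$ defines an isomorphism $\varphi_{Y,h}\colon P_{u,\rho_1}\to P_{u,\rho_2}$), and let $(u,\rho_1,\gamma_1)$ be a flat $\mathcal{G}$-bundle. (1) There exist a flat $\mathcal{G}$-bundle $(u,\rho_2,{}^h\gamma_1)$ and a 1-morphism $(Y,\mathrm{id}_Y,\mathrm{id}_Y,h,\eta)\colon(u,\rho_1,\gamma_1)\to(u,\rho_2,{}^h\gamma_1)$, whose underlying $G$-bundle isomorphism is $\varphi_{Y,h}$. (2) For any such ${}^h\gamma_1$, and any flat $\mathcal{G}$-bundle $(u,\rho_2,\gamma_2)$, there exists a 1-morphism $(Y,\mathrm{id}_Y,\mathrm{id}_Y,h,\eta')\colon(u,\rho_1,\gamma_1)\to(u,\rho_2,\gamma_2)$ if and only if $\gamma_2={}^h\gamma_1\cdot d\eta''$ for some locally constant $\eta''\colon Y\times_XY\to A$; in particular then $[{}^h\gamma_1/\gamma_2]=1\in\check{H}^2(X;A)$.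
   Context: $A$ carries the discrete topology; $Y^{[k]}$ denotes the $k$-fold fiber product of $Y$ over $X$. A $G$-valued Čech 1-cocycle is a locally constant $\rho\colon Y^{[2]}\to G$ with $\rho(y_1,y_3)=\rho(y_1,y_2)\rho(y_2,y_3)$; $P_{u,\rho}=(Y\times G)/((y_1,\rho(y_1,y_2)g)\sim(y_2,g))$. The Čech differential is $dc(y_1,..,y_{k+1})=\prod_i c(y_1,..,\widehat{y_i},..,y_{k+1})^{(-1)^{i-1}}$ and $\rho^*\alpha(y_1,..,y_4)=\alpha(\rho(y_1,y_2),\rho(y_2,y_3),\rho(y_3,y_4))$. A flat $\mathcal{G}$-bundle is a triple $(u,\rho,\gamma)$ with $\gamma\colon Y^{[3]}\to A$ locally constant, $d\gamma=\rho^*\alpha$, $\gamma(y_1,y_2,y_2)=\gamma(y_2,y_2,y_3)=1$. A 1-morphism $(u_1,\rho_1,\gamma_1)\to(u_2,\rho_2,\gamma_2)$ is $(Z,v_1,v_2,h,\eta)$ with $v_i\colon Z\to Y_i$, $u_1v_1=u_2v_2$ a surjective submersion, $h\colon Z\to G$, $\eta\colon Z^{[2]}\to A$ locally constant with (pullbacks along $v_i$ implicit) $\rho_2(z_1,z_2)h(z_2)=h(z_1)\rho_1(z_1,z_2)$ and $d\eta(z_1,z_2,z_3)=\frac{\gamma_1}{\gamma_2}(z_1,z_2,z_3)\cdot\frac{\alpha(\rho_2(z_1,z_2),h(z_2),\rho_1(z_2,z_3))}{\alpha(h(z_1),\rho_1(z_1,z_2),\rho_1(z_2,z_3))\alpha(\rho_2(z_1,z_2),\rho_2(z_2,z_3),h(z_3))}$.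 Its underlying $G$-bundle isomorphism is the one determined by $h$. *)

theory Defs
  imports "HOL-Analysis.Analysis"
begin

text \<open>The groups are written additively: the discrete group G is a type of
class group_add (not necessarily commutative), the abelian group A is a type of class
ab_group_add. Products in the paper become sums, quotients become differences.
Manifolds are modelled by (abstract) topological spaces; a surjective submersion is
modelled by a continuous surjection admitting continuous local sections.\<close>

definition locconst :: "'a topology \<Rightarrow> ('a \<Rightarrow> 'b) \<Rightarrow> bool" where
  "locconst T f \<longleftrightarrow> (\<forall>x\<in>topspace T. \<exists>U. openin T U \<and> x \<in> U \<and> (\<forall>y\<in>U. f y = f x))"

definition surj_subm :: "'x topology \<Rightarrow> 'y topology \<Rightarrow> ('y \<Rightarrow> 'x) \<Rightarrow> bool" where
  "surj_subm X Y u \<longleftrightarrow> continuous_map Y X u \<and> u ` topspace Y = topspace X \<and>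
     (\<forall>x\<in>topspace X. \<exists>U s. openin X U \<and> x \<in> U \<and> continuous_map (subtopology X U) Y s
        \<and> (\<forall>x'\<in>U. u (s x') = x'))"

definition fib2 :: "'y topology \<Rightarrow> ('y \<Rightarrow> 'x) \<Rightarrow> 'y \<Rightarrow> 'y \<Rightarrow> bool" where
  "fib2 Y u a b \<longleftrightarrow> a \<in> topspace Y \<and> b \<in> topspace Y \<and> u a = u b"

definition fib3 :: "'y topology \<Rightarrow> ('y \<Rightarrow> 'x) \<Rightarrow> 'y \<Rightarrow> 'y \<Rightarrow> 'y \<Rightarrow> bool" where
  "fib3 Y u a b c \<longleftrightarrow> fib2 Y u a b \<and> fib2 Y u b c"

definition fib4 :: "'y topology \<Rightarrow> ('y \<Rightarrow> 'x) \<Rightarrow> 'y \<Rightarrow> 'y \<Rightarrow> 'y \<Rightarrow> 'y \<Rightarrow> bool" where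
  "fib4 Y u a b c d \<longleftrightarrow> fib3 Y u a b c \<and> fib2 Y u c d"

definition fib2_top :: "'y topology \<Rightarrow> ('y \<Rightarrow> 'x) \<Rightarrow> ('y \<times> 'y) topology" where
  "fib2_top Y u = subtopology (prod_topology Y Y) {(a, b). fib2 Y u a b}"

definition fib3_top :: "'y topology \<Rightarrow> ('y \<Rightarrow> 'x) \<Rightarrow> ('y \<times> 'y \<times> 'y) topology" where
  "fib3_top Y u = subtopology (prod_topology Y (prod_topology Y Y)) {(a, b, c). fib3 Y u a b c}"

definition normalized_3cocycle :: "('g::group_add \<Rightarrow> 'g \<Rightarrow> 'g \<Rightarrow> 'a::ab_group_add) \<Rightarrow> bool" where
  "normalized_3cocycle \<alpha> \<longleftrightarrow>
     (\<forall>g1 g2 g3 g4. \<alpha> g2 g3 g4 - \<alpha> (g1 + g2) g3 g4 + \<alpha> g1 (g2 + g3) g4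
                    - \<alpha> g1 g2 (g3 + g4) + \<alpha> g1 g2 g3 = 0) \<and>
     (\<forall>g1 g2. \<alpha> 0 g1 g2 = 0 \<and> \<alpha> g1 0 g2 = 0 \<and> \<alpha> g1 g2 0 = 0)"

definition cech_1cocycle :: "'y topology \<Rightarrow> ('y \<Rightarrow> 'x) \<Rightarrow> ('y \<Rightarrow> 'y \<Rightarrow> 'g::group_add) \<Rightarrow> bool" where
  "cech_1cocycle Y u \<rho> \<longleftrightarrow> locconst (fib2_top Y u) (\<lambda>(a, b). \<rho> a b) \<and>
     (\<forall>y1 y2 y3. fib3 Y u y1 y2 y3 \<longrightarrow> \<rho> y1 y3 = \<rho> y1 y2 + \<rho> y2 y3)"

definition cech_d1 :: "('y \<Rightarrow> 'y \<Rightarrow> 'a::ab_group_add) \<Rightarrow> 'y \<Rightarrow> 'y \<Rightarrow> 'y \<Rightarrow> 'a" where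
  "cech_d1 c y1 y2 y3 = c y2 y3 - c y1 y3 + c y1 y2"

definition cech_d2 :: "('y \<Rightarrow> 'y \<Rightarrow> 'y \<Rightarrow> 'a::ab_group_add) \<Rightarrow> 'y \<Rightarrow> 'y \<Rightarrow> 'y \<Rightarrow> 'y \<Rightarrow> 'a" where
  "cech_d2 c y1 y2 y3 y4 = c y2 y3 y4 - c y1 y3 y4 + c y1 y2 y4 - c y1 y2 y3"

definition flat_bundle :: "('g::group_add \<Rightarrow> 'g \<Rightarrow> 'g \<Rightarrow> 'a::ab_group_add) \<Rightarrow> 'x topology \<Rightarrow>
    'y topology \<Rightarrow> ('y \<Rightarrow> 'x) \<Rightarrow> ('y \<Rightarrow> 'y \<Rightarrow> 'g) \<Rightarrow> ('y \<Rightarrow> 'y \<Rightarrow> 'y \<Rightarrow> 'a) \<Rightarrow> bool" where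
  "flat_bundle \<alpha> X Y u \<rho> \<gamma> \<longleftrightarrow> surj_subm X Y u \<and> cech_1cocycle Y u \<rho> \<and>
     locconst (fib3_top Y u) (\<lambda>(a, b, c). \<gamma> a b c) \<and>
     (\<forall>y1 y2 y3 y4. fib4 Y u y1 y2 y3 y4 \<longrightarrow>
        cech_d2 \<gamma> y1 y2 y3 y4 = \<alpha> (\<rho> y1 y2) (\<rho> y2 y3) (\<rho> y3 y4)) \<and>
     (\<forall>y1 y2. fib2 Y u y1 y2 \<longrightarrow> \<gamma> y1 y2 y2 = 0) \<and>
     (\<forall>y2 y3. fib2 Y u y2 y3 \<longrightarrow> \<gamma> y2 y2 y3 = 0)"

text \<open>1-morphism (Z, v1, v2, h, \<eta>) : (u1, \<rho>1, \<gamma>1) \<rightarrow> (u2, \<rho>2, \<gamma>2); pullbacks along v1, v2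
explicit. Fiber products of Z are taken over X via u1 \<circ> v1.\<close>
definition flat_1mor :: "('g::group_add \<Rightarrow> 'g \<Rightarrow> 'g \<Rightarrow> 'a::ab_group_add) \<Rightarrow> 'x topology \<Rightarrow>
    'y1 topology \<Rightarrow> ('y1 \<Rightarrow> 'x) \<Rightarrow> ('y1 \<Rightarrow> 'y1 \<Rightarrow> 'g) \<Rightarrow> ('y1 \<Rightarrow> 'y1 \<Rightarrow> 'y1 \<Rightarrow> 'a) \<Rightarrow>
    'y2 topology \<Rightarrow> ('y2 \<Rightarrow> 'x) \<Rightarrow> ('y2 \<Rightarrow> 'y2 \<Rightarrow> 'g) \<Rightarrow> ('y2 \<Rightarrow> 'y2 \<Rightarrow> 'y2 \<Rightarrow> 'a) \<Rightarrow>
    'z topology \<Rightarrow> ('z \<Rightarrow> 'y1) \<Rightarrow> ('z \<Rightarrow> 'y2) \<Rightarrow> ('z \<Rightarrow> 'g) \<Rightarrow> ('z \<Rightarrow> 'z \<Rightarrow> 'a) \<Rightarrow> bool" where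
  "flat_1mor \<alpha> X Y1 u1 \<rho>1 \<gamma>1 Y2 u2 \<rho>2 \<gamma>2 Z v1 v2 h \<eta> \<longleftrightarrow>
     continuous_map Z Y1 v1 \<and> continuous_map Z Y2 v2 \<and>
     (\<forall>z\<in>topspace Z. u1 (v1 z) = u2 (v2 z)) \<and>
     surj_subm X Z (\<lambda>z. u1 (v1 z)) \<and>
     locconst Z h \<and>
     locconst (fib2_top Z (\<lambda>z. u1 (v1 z))) (\<lambda>(a, b). \<eta> a b) \<and>
     (\<forall>z1 z2. fib2 Z (\<lambda>z. u1 (v1 z)) z1 z2 \<longrightarrow>
        \<rho>2 (v2 z1) (v2 z2) + h z2 = h z1 + \<rho>1 (v1 z1) (v1 z2)) \<and>
     (\<forall>z1 z2 z3. fib3 Z (\<lambda>z. u1 (v1 z)) z1 z2 z3 \<longrightarrow>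
        cech_d1 \<eta> z1 z2 z3 =
          (\<gamma>1 (v1 z1) (v1 z2) (v1 z3) - \<gamma>2 (v2 z1) (v2 z2) (v2 z3))
          + \<alpha> (\<rho>2 (v2 z1) (v2 z2)) (h z2) (\<rho>1 (v1 z2) (v1 z3))
          - \<alpha> (h z1) (\<rho>1 (v1 z1) (v1 z2)) (\<rho>1 (v1 z2) (v1 z3))
          - \<alpha> (\<rho>2 (v2 z1) (v2 z2)) (\<rho>2 (v2 z2) (v2 z3)) (h z3))"

end

theory Submission
  imports Defs
begin


lemma locconst_comp:
  assumes "continuous_map S T g" "locconst T f" "\<forall>x\<in>topspace S. f' x = f (g x)"
  shows "locconst S f'"
  unfolding locconst_def
proof
  fix x assume x: "x \<in> topspace S"
  have "g x \<in> topspace T" using continuous_map_funspace[OF assms(1)] x by (rule funcset_mem)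
  then obtain U where U: "openin T U" "g x \<in> U" "\<forall>y\<in>U. f y = f (g x)"
    using assms(2) unfolding locconst_def by blast
  let ?V = "{y \<in> topspace S. g y \<in> U}"
  have "openin S ?V" by (rule openin_continuous_map_preimage[OF assms(1) U(1)])
  moreover have "x \<in> ?V" using x U(2) by simp
  moreover have "\<forall>y\<in>?V. f' y = f' x"
  proof
    fix y assume "y \<in> ?V"
    then have "y \<in> topspace S" "g y \<in> U" by simp_all
    then show "f' y = f' x" using U(3) assms(3) x by simp
  qed
  ultimately show "\<exists>U. openin S U \<and> x \<in> U \<and> (\<forall>y\<in>U. f' y = f' x)" by blast
qed

lemma locconst2:
  assumes "locconst T f" "locconst T g"
  shows "locconst T (\<lambda>x. F (f x) (g x))"
  unfolding locconst_def
proof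
  fix x assume x: "x \<in> topspace T"
  obtain U where U: "openin T U" "x \<in> U" "\<forall>y\<in>U. f y = f x"
    using assms(1) x unfolding locconst_def by blast
  obtain V where V: "openin T V" "x \<in> V" "\<forall>y\<in>V. g y = g x"
    using assms(2) x unfolding locconst_def by blast
  have "openin T (U \<inter> V)" using U(1) V(1) by (rule openin_Int)
  moreover have "x \<in> U \<inter> V" using U(2) V(2) by simp
  moreover have "\<forall>y\<in>U \<inter> V. F (f y) (g y) = F (f x) (g x)" using U(3) V(3) by simp
  ultimately show "\<exists>U. openin T U \<and> x \<in> U \<and> (\<forall>y\<in>U. F (f y) (g y) = F (f x) (g x))"
    by blast
qed

lemma locconst3:
  assumes "locconst T f" "locconst T g" "locconst T k"
  shows "locconst T (\<lambda>x. F (f x) (g x) (k x))"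
proof -
  have "locconst T (\<lambda>x. (f x, g x))" using locconst2[OF assms(1,2), of Pair] .
  from locconst2[OF this assms(3), of "\<lambda>p z. F (fst p) (snd p) z"] show ?thesis by simp
qed

lemma locconst_const: "locconst T (\<lambda>x. c)"
  unfolding locconst_def using openin_topspace by blast

lemma c3_1: "continuous_map (fib3_top Y u) Y fst"
  unfolding fib3_top_def by (intro continuous_map_from_subtopology continuous_map_fst)
lemma c3_2: "continuous_map (fib3_top Y u) Y (\<lambda>p. fst (snd p))"
  unfolding fib3_top_def
  by (intro continuous_map_from_subtopology continuous_map_compose[OF continuous_map_snd continuous_map_fst, unfolded o_def])
lemma c3_3: "continuous_map (fib3_top Y u) Y (\<lambda>p. snd (snd p))"
  unfolding fib3_top_def
  by (intro continuous_map_from_subtopology continuous_map_compose[OF continuous_map_snd continuous_map_snd, unfolded o_def])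
lemma c3_top: "p \<in> topspace (fib3_top Y u) \<longleftrightarrow> fib3 Y u (fst p) (fst (snd p)) (snd (snd p))"
  unfolding fib3_top_def by (cases p) (auto simp: fib3_def fib2_def)
lemma c2_top: "p \<in> topspace (fib2_top Y u) \<longleftrightarrow> fib2 Y u (fst p) (snd p)"
  unfolding fib2_top_def by (cases p) (auto simp: fib2_def)

lemma c3_pair:
  assumes "continuous_map (fib3_top Y u) Y f" "continuous_map (fib3_top Y u) Y g"
    "\<And>a b c. fib3 Y u a b c \<Longrightarrow> fib2 Y u (f (a,b,c)) (g (a,b,c))"
  shows "continuous_map (fib3_top Y u) (fib2_top Y u) (\<lambda>p. (f p, g p))"
proof -
  have "continuous_map (fib3_top Y u) (prod_topology Y Y) (\<lambda>p. (f p, g p))"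
    using assms(1,2) by (simp add: continuous_map_paired)
  moreover have "(\<lambda>p. (f p, g p)) ` topspace (fib3_top Y u) \<subseteq> {(a, b). fib2 Y u a b}"
    using assms(3) c3_top by fastforce
  ultimately show ?thesis unfolding fib2_top_def
    by (auto simp add: continuous_map_in_subtopology)
qed

lemma lc3_from2:
  assumes "locconst (fib2_top Y u) (\<lambda>(a, b). r a b)"
    "continuous_map (fib3_top Y u) Y f" "continuous_map (fib3_top Y u) Y g"
    "\<And>a b c. fib3 Y u a b c \<Longrightarrow> fib2 Y u (f (a,b,c)) (g (a,b,c))"
  shows "locconst (fib3_top Y u) (\<lambda>p. r (f p) (g p))"
  by (rule locconst_comp[OF c3_pair[OF assms(2-4)] assms(1)]) auto

lemma lc3_from1:
  assumes "locconst Y h" "continuous_map (fib3_top Y u) Y f"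
  shows "locconst (fib3_top Y u) (\<lambda>p. h (f p))"
  by (rule locconst_comp[OF assms(2) assms(1)]) simp



lemma key:
  fixes \<alpha> :: "'g::group_add \<Rightarrow> 'g \<Rightarrow> 'g \<Rightarrow> 'a::ab_group_add"
  assumes coc: "\<forall>g1 g2 g3 g4. \<alpha> g2 g3 g4 - \<alpha> (g1 + g2) g3 g4 + \<alpha> g1 (g2 + g3) g4
                    - \<alpha> g1 g2 (g3 + g4) + \<alpha> g1 g2 g3 = 0"
    and e1: "x + h2 = h1 + a" and e2: "h2 + b = y + h3" and e3: "h3 + c = z + h4"
    and e4: "x + y = x13" and e5: "a + b = a13" and e6: "b + c = b24" and e7: "y + z = y24"
  shows "\<alpha> x y z - \<alpha> a b c =
     (\<alpha> y h3 c - \<alpha> h2 b c - \<alpha> y z h4)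
   - (\<alpha> x13 h3 c - \<alpha> h1 a13 c - \<alpha> x13 z h4)
   + (\<alpha> x h2 b24 - \<alpha> h1 a b24 - \<alpha> x y24 h4)
   - (\<alpha> x h2 b - \<alpha> h1 a b - \<alpha> x y h3)"
proof -
  have coc': "\<alpha> q r s - \<alpha> (p + q) r s + \<alpha> p (q + r) s
                    - \<alpha> p q (r + s) + \<alpha> p q r = 0" for p q r s using coc by blast
  have E1: "\<alpha> h2 b c - \<alpha> (h1 + a) b c + \<alpha> x (y + h3) c - \<alpha> x h2 b24 + \<alpha> x h2 b = 0"
    using coc'[where p=x and q=h2 and r=b and s=c] unfolding e1 e2 e6 .
  have E2: "\<alpha> y h3 c - \<alpha> x13 h3 c + \<alpha> x (y + h3) c - \<alpha> x y (z + h4) + \<alpha> x y h3 = 0"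
    using coc'[where p=x and q=y and r=h3 and s=c] unfolding e3 e4 .
  have E3: "\<alpha> y z h4 - \<alpha> x13 z h4 + \<alpha> x y24 h4 - \<alpha> x y (z + h4) + \<alpha> x y z = 0"
    using coc'[where p=x and q=y and r=z and s=h4] unfolding e4 e7 .
  have E4: "\<alpha> a b c - \<alpha> (h1 + a) b c + \<alpha> h1 a13 c - \<alpha> h1 a b24 + \<alpha> h1 a b = 0"
    using coc'[where p=h1 and q=a and r=b and s=c] unfolding e5 e6 .
  have "\<alpha> x y z - \<alpha> a b c - ((\<alpha> y h3 c - \<alpha> h2 b c - \<alpha> y z h4)
   - (\<alpha> x13 h3 c - \<alpha> h1 a13 c - \<alpha> x13 z h4)
   + (\<alpha> x h2 b24 - \<alpha> h1 a b24 - \<alpha> x y24 h4)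
   - (\<alpha> x h2 b - \<alpha> h1 a b - \<alpha> x y h3))
   = (\<alpha> y z h4 - \<alpha> x13 z h4 + \<alpha> x y24 h4 - \<alpha> x y (z + h4) + \<alpha> x y z)
   - (\<alpha> y h3 c - \<alpha> x13 h3 c + \<alpha> x (y + h3) c - \<alpha> x y (z + h4) + \<alpha> x y h3)
   + (\<alpha> h2 b c - \<alpha> (h1 + a) b c + \<alpha> x (y + h3) c - \<alpha> x h2 b24 + \<alpha> x h2 b)
   - (\<alpha> a b c - \<alpha> (h1 + a) b c + \<alpha> h1 a13 c - \<alpha> h1 a b24 + \<alpha> h1 a b)"
    by (simp add: algebra_simps)
  then show ?thesis unfolding E1 E2 E3 E4 by simp
qed


lemma locconst_cong:
  assumes "locconst T f" "\<forall>x\<in>topspace T. g x = f x" shows "locconst T g"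
  by (rule locconst_comp[OF continuous_map_id assms(1)]) (use assms(2) in simp)

lemma locconst_pair_diff:
  assumes "locconst T (\<lambda>(a, b). f a b)" "locconst T (\<lambda>(a, b). g a b)"
  shows "locconst T (\<lambda>(a, b). f a b - g a b)"
  by (rule locconst_cong[OF locconst2[OF assms, of "(-)"]]) (auto split: prod.splits)

lemma mor_id:
  "flat_1mor \<alpha> X Y u \<rho>1 \<gamma>1 Y u \<rho>2 \<gamma>2 Y id id h \<eta> \<longleftrightarrow>
     surj_subm X Y u \<and> locconst Y h \<and> locconst (fib2_top Y u) (\<lambda>(a, b). \<eta> a b) \<and>
     (\<forall>z1 z2. fib2 Y u z1 z2 \<longrightarrow> \<rho>2 z1 z2 + h z2 = h z1 + \<rho>1 z1 z2) \<and>
     (\<forall>z1 z2 z3. fib3 Y u z1 z2 z3 \<longrightarrow>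
        cech_d1 \<eta> z1 z2 z3 =
          (\<gamma>1 z1 z2 z3 - \<gamma>2 z1 z2 z3)
          + \<alpha> (\<rho>2 z1 z2) (h z2) (\<rho>1 z2 z3)
          - \<alpha> (h z1) (\<rho>1 z1 z2) (\<rho>1 z2 z3)
          - \<alpha> (\<rho>2 z1 z2) (\<rho>2 z2 z3) (h z3))"
  by (simp add: flat_1mor_def)

theorem mainTheorem8:
  fixes \<alpha> :: "'g::group_add \<Rightarrow> 'g \<Rightarrow> 'g \<Rightarrow> 'a::ab_group_add"
    and X :: "'x topology" and Y :: "'y topology" and u :: "'y \<Rightarrow> 'x"
    and \<rho>1 \<rho>2 :: "'y \<Rightarrow> 'y \<Rightarrow> 'g" and h :: "'y \<Rightarrow> 'g"
    and \<gamma>1 :: "'y \<Rightarrow> 'y \<Rightarrow> 'y \<Rightarrow> 'a"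
  assumes "normalized_3cocycle \<alpha>"
    and "surj_subm X Y u"
    and "cech_1cocycle Y u \<rho>1" and "cech_1cocycle Y u \<rho>2"
    and "locconst Y h"
    and "\<forall>y1 y2. fib2 Y u y1 y2 \<longrightarrow> \<rho>2 y1 y2 + h y2 = h y1 + \<rho>1 y1 y2"
    and "flat_bundle \<alpha> X Y u \<rho>1 \<gamma>1"
  shows "(\<exists>h\<gamma>1 \<eta>. flat_bundle \<alpha> X Y u \<rho>2 h\<gamma>1 \<and>
            flat_1mor \<alpha> X Y u \<rho>1 \<gamma>1 Y u \<rho>2 h\<gamma>1 Y id id h \<eta>)
       \<and> (\<forall>h\<gamma>1 \<eta>. flat_bundle \<alpha> X Y u \<rho>2 h\<gamma>1 \<and>
            flat_1mor \<alpha> X Y u \<rho>1 \<gamma>1 Y u \<rho>2 h\<gamma>1 Y id id h \<eta> \<longrightarrow>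
          (\<forall>\<gamma>2. flat_bundle \<alpha> X Y u \<rho>2 \<gamma>2 \<longrightarrow>
            ((\<exists>\<eta>'. flat_1mor \<alpha> X Y u \<rho>1 \<gamma>1 Y u \<rho>2 \<gamma>2 Y id id h \<eta>') \<longleftrightarrow>
             (\<exists>\<eta>''. locconst (fib2_top Y u) (\<lambda>(a, b). \<eta>'' a b) \<and>
                (\<forall>y1 y2 y3. fib3 Y u y1 y2 y3 \<longrightarrow>
                   \<gamma>2 y1 y2 y3 = h\<gamma>1 y1 y2 y3 + cech_d1 \<eta>'' y1 y2 y3)))))"
proof -
  note fb = assms(7)[unfolded flat_bundle_def]
  have coc: "\<forall>g1 g2 g3 g4. \<alpha> g2 g3 g4 - \<alpha> (g1 + g2) g3 g4 + \<alpha> g1 (g2 + g3) g4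
                    - \<alpha> g1 g2 (g3 + g4) + \<alpha> g1 g2 g3 = 0"
   and nrm: "\<And>g1 g2. \<alpha> 0 g1 g2 = 0" "\<And>g1 g2. \<alpha> g1 0 g2 = 0" "\<And>g1 g2. \<alpha> g1 g2 0 = 0"
    using assms(1) unfolding normalized_3cocycle_def by auto
  have r1c: "\<And>a b c. fib3 Y u a b c \<Longrightarrow> \<rho>1 a c = \<rho>1 a b + \<rho>1 b c"
   and r2c: "\<And>a b c. fib3 Y u a b c \<Longrightarrow> \<rho>2 a c = \<rho>2 a b + \<rho>2 b c"
   and r1l: "locconst (fib2_top Y u) (\<lambda>(a, b). \<rho>1 a b)"
   and r2l: "locconst (fib2_top Y u) (\<lambda>(a, b). \<rho>2 a b)"
    using assms(3,4) unfolding cech_1cocycle_def by auto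
  have r10: "\<rho>1 a a = 0" if "a \<in> topspace Y" for a
  proof -
    have "fib3 Y u a a a" using that by (simp add: fib3_def fib2_def)
    then have e: "\<rho>1 a a + \<rho>1 a a = \<rho>1 a a" by (rule r1c[symmetric])
    have "\<rho>1 a a = \<rho>1 a a + \<rho>1 a a - \<rho>1 a a" by (simp only: add_diff_cancel)
    also have "\<dots> = \<rho>1 a a - \<rho>1 a a" by (simp only: e)
    also have "\<dots> = 0" by (rule diff_self)
    finally show ?thesis .
  qed
  have r20: "\<rho>2 a a = 0" if "a \<in> topspace Y" for a
  proof -
    have "fib3 Y u a a a" using that by (simp add: fib3_def fib2_def)
    then have e: "\<rho>2 a a + \<rho>2 a a = \<rho>2 a a" by (rule r2c[symmetric])
    have "\<rho>2 a a = \<rho>2 a a + \<rho>2 a a - \<rho>2 a a" by (simp only: add_diff_cancel)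
    also have "\<dots> = \<rho>2 a a - \<rho>2 a a" by (simp only: e)
    also have "\<dots> = 0" by (rule diff_self)
    finally show ?thesis .
  qed
  have hrel: "\<And>a b. fib2 Y u a b \<Longrightarrow> \<rho>2 a b + h b = h a + \<rho>1 a b" using assms(6) by blast
  define hg where "hg = (\<lambda>a b c. \<gamma>1 a b c + \<alpha> (\<rho>2 a b) (h b) (\<rho>1 b c)
     - \<alpha> (h a) (\<rho>1 a b) (\<rho>1 b c) - \<alpha> (\<rho>2 a b) (\<rho>2 b c) (h c))"
  have Lg: "locconst (fib3_top Y u) (\<lambda>p. \<gamma>1 (fst p) (fst (snd p)) (snd (snd p)))"
    by (rule locconst_cong[OF conjunct1[OF conjunct2[OF conjunct2[OF fb]]]]) (auto split: prod.splits)
  have f12: "\<And>a b c. fib3 Y u a b c \<Longrightarrow> fib2 Y u (fst (a,b,c)) (fst (snd (a,b,c)))"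
   and f23: "\<And>a b c. fib3 Y u a b c \<Longrightarrow> fib2 Y u (fst (snd (a,b,c))) (snd (snd (a,b,c)))"
    by (auto simp: fib3_def)
  note L12a = lc3_from2[OF r1l c3_1 c3_2 f12]
  note L12b = lc3_from2[OF r2l c3_1 c3_2 f12]
  note L23a = lc3_from2[OF r1l c3_2 c3_3 f23]
  note L23b = lc3_from2[OF r2l c3_2 c3_3 f23]
  note Lh1 = lc3_from1[OF assms(5) c3_1]
  note Lh2 = lc3_from1[OF assms(5) c3_2]
  note Lh3 = lc3_from1[OF assms(5) c3_3]
  note T1 = locconst3[OF L12b Lh2 L23a, of \<alpha>]
  note T2 = locconst3[OF Lh1 L12a L23a, of \<alpha>]
  note T3 = locconst3[OF L12b L23b Lh3, of \<alpha>]
  note S = locconst2[OF locconst2[OF locconst2[OF Lg T1, of "(+)"] T2, of "(-)"] T3, of "(-)"]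
  have hgl: "locconst (fib3_top Y u) (\<lambda>(a, b, c). hg a b c)"
    by (rule locconst_cong[OF S]) (auto simp: hg_def split: prod.splits)
  have hgd: "cech_d2 hg y1 y2 y3 y4 = \<alpha> (\<rho>2 y1 y2) (\<rho>2 y2 y3) (\<rho>2 y3 y4)"
    if f4: "fib4 Y u y1 y2 y3 y4" for y1 y2 y3 y4
  proof -
    have ff: "fib2 Y u y1 y2" "fib2 Y u y2 y3" "fib2 Y u y3 y4" "fib3 Y u y1 y2 y3"
      "fib3 Y u y2 y3 y4" "fib3 Y u y1 y3 y4" "fib3 Y u y1 y2 y4"
      using f4 by (auto simp: fib4_def fib3_def fib2_def)
    have K: "\<alpha> (\<rho>2 y1 y2) (\<rho>2 y2 y3) (\<rho>2 y3 y4) - \<alpha> (\<rho>1 y1 y2) (\<rho>1 y2 y3) (\<rho>1 y3 y4) =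
     (\<alpha> (\<rho>2 y2 y3) (h y3) (\<rho>1 y3 y4) - \<alpha> (h y2) (\<rho>1 y2 y3) (\<rho>1 y3 y4) - \<alpha> (\<rho>2 y2 y3) (\<rho>2 y3 y4) (h y4))
   - (\<alpha> (\<rho>2 y1 y3) (h y3) (\<rho>1 y3 y4) - \<alpha> (h y1) (\<rho>1 y1 y3) (\<rho>1 y3 y4) - \<alpha> (\<rho>2 y1 y3) (\<rho>2 y3 y4) (h y4))
   + (\<alpha> (\<rho>2 y1 y2) (h y2) (\<rho>1 y2 y4) - \<alpha> (h y1) (\<rho>1 y1 y2) (\<rho>1 y2 y4) - \<alpha> (\<rho>2 y1 y2) (\<rho>2 y2 y4) (h y4))
   - (\<alpha> (\<rho>2 y1 y2) (h y2) (\<rho>1 y2 y3) - \<alpha> (h y1) (\<rho>1 y1 y2) (\<rho>1 y2 y3) - \<alpha> (\<rho>2 y1 y2) (\<rho>2 y2 y3) (h y3))"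
      by (rule key[OF coc hrel[OF ff(1)] hrel[OF ff(2), symmetric] hrel[OF ff(3), symmetric]
            r2c[OF ff(4), symmetric] r1c[OF ff(4), symmetric] r1c[OF ff(5), symmetric] r2c[OF ff(5), symmetric]])
    have G: "cech_d2 \<gamma>1 y1 y2 y3 y4 = \<alpha> (\<rho>1 y1 y2) (\<rho>1 y2 y3) (\<rho>1 y3 y4)"
      using fb f4 by blast
    have "cech_d2 hg y1 y2 y3 y4 = cech_d2 \<gamma>1 y1 y2 y3 y4 +
      ((\<alpha> (\<rho>2 y2 y3) (h y3) (\<rho>1 y3 y4) - \<alpha> (h y2) (\<rho>1 y2 y3) (\<rho>1 y3 y4) - \<alpha> (\<rho>2 y2 y3) (\<rho>2 y3 y4) (h y4))
   - (\<alpha> (\<rho>2 y1 y3) (h y3) (\<rho>1 y3 y4) - \<alpha> (h y1) (\<rho>1 y1 y3) (\<rho>1 y3 y4) - \<alpha> (\<rho>2 y1 y3) (\<rho>2 y3 y4) (h y4))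
   + (\<alpha> (\<rho>2 y1 y2) (h y2) (\<rho>1 y2 y4) - \<alpha> (h y1) (\<rho>1 y1 y2) (\<rho>1 y2 y4) - \<alpha> (\<rho>2 y1 y2) (\<rho>2 y2 y4) (h y4))
   - (\<alpha> (\<rho>2 y1 y2) (h y2) (\<rho>1 y2 y3) - \<alpha> (h y1) (\<rho>1 y1 y2) (\<rho>1 y2 y3) - \<alpha> (\<rho>2 y1 y2) (\<rho>2 y2 y3) (h y3)))"
      by (simp add: cech_d2_def hg_def algebra_simps)
    also have "\<dots> = \<alpha> (\<rho>2 y1 y2) (\<rho>2 y2 y3) (\<rho>2 y3 y4)"
      unfolding G K[symmetric] by simp
    finally show ?thesis .
  qed
  have hgn1: "hg y1 y2 y2 = 0" if "fib2 Y u y1 y2" for y1 y2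
  proof -
    have "\<gamma>1 y1 y2 y2 = 0" using fb that by blast
    moreover have "y2 \<in> topspace Y" using that by (simp add: fib2_def)
    ultimately show ?thesis by (simp add: hg_def r10 r20 nrm)
  qed
  have hgn2: "hg y2 y2 y3 = 0" if "fib2 Y u y2 y3" for y2 y3
  proof -
    have "\<gamma>1 y2 y2 y3 = 0" using fb that by blast
    moreover have "y2 \<in> topspace Y" using that by (simp add: fib2_def)
    ultimately show ?thesis by (simp add: hg_def r10 r20 nrm)
  qed
  have FB: "flat_bundle \<alpha> X Y u \<rho>2 hg"
    unfolding flat_bundle_def using assms(2,4) hgl hgd hgn1 hgn2 by blast
  have l0: "locconst (fib2_top Y u) (\<lambda>(a, b). (\<lambda>_ _. 0::'a) a b)"
    by (rule locconst_cong[OF locconst_const]) auto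
  have M: "flat_1mor \<alpha> X Y u \<rho>1 \<gamma>1 Y u \<rho>2 hg Y id id h (\<lambda>_ _. 0)"
    unfolding mor_id using assms(2,5,6) l0 by (auto simp: cech_d1_def hg_def algebra_simps)
  have part2: "(\<exists>\<eta>'. flat_1mor \<alpha> X Y u \<rho>1 \<gamma>1 Y u \<rho>2 \<gamma>2 Y id id h \<eta>') \<longleftrightarrow>
             (\<exists>\<eta>''. locconst (fib2_top Y u) (\<lambda>(a, b). \<eta>'' a b) \<and>
                (\<forall>y1 y2 y3. fib3 Y u y1 y2 y3 \<longrightarrow>
                   \<gamma>2 y1 y2 y3 = h\<gamma>1 y1 y2 y3 + cech_d1 \<eta>'' y1 y2 y3))"
    if M1: "flat_1mor \<alpha> X Y u \<rho>1 \<gamma>1 Y u \<rho>2 h\<gamma>1 Y id id h \<eta>" for h\<gamma>1 \<eta> \<gamma>2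
  proof
    assume "\<exists>\<eta>'. flat_1mor \<alpha> X Y u \<rho>1 \<gamma>1 Y u \<rho>2 \<gamma>2 Y id id h \<eta>'"
    then obtain \<eta>' where M2: "flat_1mor \<alpha> X Y u \<rho>1 \<gamma>1 Y u \<rho>2 \<gamma>2 Y id id h \<eta>'" by blast
    note m1 = M1[unfolded mor_id] and m2 = M2[unfolded mor_id]
    show "\<exists>\<eta>''. locconst (fib2_top Y u) (\<lambda>(a, b). \<eta>'' a b) \<and>
                (\<forall>y1 y2 y3. fib3 Y u y1 y2 y3 \<longrightarrow>
                   \<gamma>2 y1 y2 y3 = h\<gamma>1 y1 y2 y3 + cech_d1 \<eta>'' y1 y2 y3)"
    proof (intro exI conjI allI impI)
      show "locconst (fib2_top Y u) (\<lambda>(a, b). (\<lambda>a b. \<eta> a b - \<eta>' a b) a b)"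
        using locconst_pair_diff[of _ \<eta> \<eta>'] m1 m2 by simp
      fix y1 y2 y3 assume f: "fib3 Y u y1 y2 y3"
      have A: "cech_d1 \<eta> y1 y2 y3 = (\<gamma>1 y1 y2 y3 - h\<gamma>1 y1 y2 y3)
          + \<alpha> (\<rho>2 y1 y2) (h y2) (\<rho>1 y2 y3) - \<alpha> (h y1) (\<rho>1 y1 y2) (\<rho>1 y2 y3)
          - \<alpha> (\<rho>2 y1 y2) (\<rho>2 y2 y3) (h y3)" using m1 f by blast
      have B: "cech_d1 \<eta>' y1 y2 y3 = (\<gamma>1 y1 y2 y3 - \<gamma>2 y1 y2 y3)
          + \<alpha> (\<rho>2 y1 y2) (h y2) (\<rho>1 y2 y3) - \<alpha> (h y1) (\<rho>1 y1 y2) (\<rho>1 y2 y3)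
          - \<alpha> (\<rho>2 y1 y2) (\<rho>2 y2 y3) (h y3)" using m2 f by blast
      have "h\<gamma>1 y1 y2 y3 + cech_d1 (\<lambda>a b. \<eta> a b - \<eta>' a b) y1 y2 y3
          = h\<gamma>1 y1 y2 y3 + cech_d1 \<eta> y1 y2 y3 - cech_d1 \<eta>' y1 y2 y3"
        by (simp add: cech_d1_def algebra_simps)
      also have "\<dots> = \<gamma>2 y1 y2 y3" unfolding A B by (simp add: algebra_simps)
      finally show "\<gamma>2 y1 y2 y3 = h\<gamma>1 y1 y2 y3 + cech_d1 (\<lambda>a b. \<eta> a b - \<eta>' a b) y1 y2 y3" by simp
    qed
  next
    assume "\<exists>\<eta>''. locconst (fib2_top Y u) (\<lambda>(a, b). \<eta>'' a b) \<and>
                (\<forall>y1 y2 y3. fib3 Y u y1 y2 y3 \<longrightarrow>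
                   \<gamma>2 y1 y2 y3 = h\<gamma>1 y1 y2 y3 + cech_d1 \<eta>'' y1 y2 y3)"
    then obtain \<eta>'' where e1: "locconst (fib2_top Y u) (\<lambda>(a, b). \<eta>'' a b)"
      and e2: "\<And>y1 y2 y3. fib3 Y u y1 y2 y3 \<Longrightarrow> \<gamma>2 y1 y2 y3 = h\<gamma>1 y1 y2 y3 + cech_d1 \<eta>'' y1 y2 y3"
      by blast
    note m1 = M1[unfolded mor_id]
    have "flat_1mor \<alpha> X Y u \<rho>1 \<gamma>1 Y u \<rho>2 \<gamma>2 Y id id h (\<lambda>a b. \<eta> a b - \<eta>'' a b)"
      unfolding mor_id
    proof (intro conjI allI impI)
      show "locconst (fib2_top Y u) (\<lambda>(a, b). (\<lambda>a b. \<eta> a b - \<eta>'' a b) a b)"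
        using locconst_pair_diff[of _ \<eta> \<eta>''] m1 e1 by simp
      fix y1 y2 y3 assume f: "fib3 Y u y1 y2 y3"
      have A: "cech_d1 \<eta> y1 y2 y3 = (\<gamma>1 y1 y2 y3 - h\<gamma>1 y1 y2 y3)
          + \<alpha> (\<rho>2 y1 y2) (h y2) (\<rho>1 y2 y3) - \<alpha> (h y1) (\<rho>1 y1 y2) (\<rho>1 y2 y3)
          - \<alpha> (\<rho>2 y1 y2) (\<rho>2 y2 y3) (h y3)" using m1 f by blast
      have B: "\<gamma>2 y1 y2 y3 = h\<gamma>1 y1 y2 y3 + cech_d1 \<eta>'' y1 y2 y3" using e2 f .
      have "cech_d1 (\<lambda>a b. \<eta> a b - \<eta>'' a b) y1 y2 y3 = cech_d1 \<eta> y1 y2 y3 - cech_d1 \<eta>'' y1 y2 y3"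
        by (simp add: cech_d1_def algebra_simps)
      also have "\<dots> = (\<gamma>1 y1 y2 y3 - \<gamma>2 y1 y2 y3)
          + \<alpha> (\<rho>2 y1 y2) (h y2) (\<rho>1 y2 y3) - \<alpha> (h y1) (\<rho>1 y1 y2) (\<rho>1 y2 y3)
          - \<alpha> (\<rho>2 y1 y2) (\<rho>2 y2 y3) (h y3)" unfolding A B by (simp add: algebra_simps)
      finally show "cech_d1 (\<lambda>a b. \<eta> a b - \<eta>'' a b) y1 y2 y3 = (\<gamma>1 y1 y2 y3 - \<gamma>2 y1 y2 y3)
          + \<alpha> (\<rho>2 y1 y2) (h y2) (\<rho>1 y2 y3) - \<alpha> (h y1) (\<rho>1 y1 y2) (\<rho>1 y2 y3)
          - \<alpha> (\<rho>2 y1 y2) (\<rho>2 y2 y3) (h y3)" .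
    qed (use m1 in auto)
    then show "\<exists>\<eta>'. flat_1mor \<alpha> X Y u \<rho>1 \<gamma>1 Y u \<rho>2 \<gamma>2 Y id id h \<eta>'" by blast
  qed
  show ?thesis
  proof (intro conjI allI impI)
    show "\<exists>h\<gamma>1 \<eta>. flat_bundle \<alpha> X Y u \<rho>2 h\<gamma>1 \<and>
            flat_1mor \<alpha> X Y u \<rho>1 \<gamma>1 Y u \<rho>2 h\<gamma>1 Y id id h \<eta>"
      using FB M by (intro exI conjI)
  next
    fix h\<gamma>1 \<eta> \<gamma>2
    assume H: "flat_bundle \<alpha> X Y u \<rho>2 h\<gamma>1 \<and> flat_1mor \<alpha> X Y u \<rho>1 \<gamma>1 Y u \<rho>2 h\<gamma>1 Y id id h \<eta>"
    show "(\<exists>\<eta>'. flat_1mor \<alpha> X Y u \<rho>1 \<gamma>1 Y u \<rho>2 \<gamma>2 Y id id h \<eta>') \<longleftrightarrow>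
             (\<exists>\<eta>''. locconst (fib2_top Y u) (\<lambda>(a, b). \<eta>'' a b) \<and>
                (\<forall>y1 y2 y3. fib3 Y u y1 y2 y3 \<longrightarrow>
                   \<gamma>2 y1 y2 y3 = h\<gamma>1 y1 y2 y3 + cech_d1 \<eta>'' y1 y2 y3))"
      by (rule part2[OF conjunct2[OF H]])
  qed
qed

end
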